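(* Let $f: B_1(0) \subseteq \mathbb{C} \to \mathbb{R}^3$ be a smooth conformal Willmore immersion with pull-back metric $g = f^*g_{euc} = e^{2u} g_{euc}$. Let $\nu$ be a smooth unit normal field along $f$, $h_{ij}$ the scalar second fundamental form with respect to $\nu$, $H = g^{ij}h_{ij}$ the scalar mean curvature, $h^0_{ij} = h_{ij} - \frac12 H g_{ij}$, and $\varphi := h^0_{11} - i\, h^0_{12}$. Then there is a smooth matrix-valued function $M: B_1(0) \to \mathbb{C}^{2\times 2}$ such that $$\partial_{\bar z} (\varphi, \partial_z H)^T = M \cdot (\varphi, \partial_z H)^T \quad \text{on } B_1(0).$$
   Context: Wirtinger derivatives: $\partial_z = \frac12(\partial_1 - i\partial_2)$, $\partial_{\bar z} = \frac12(\partial_1 + i \partial_2)$. The Willmore functional of an immersion $f$ of a surface into $\mathbb{R}^3$ is $\mathcal{W}(f) = \frac14 \int H^2\, d\mu_g$. A Willmore immersion is a critical point of $\mathcal{W}$; such an immersion satisfies the Euler–Lagrange equation $\Delta_g H + |A^0|_g^2 H = 0$, where $\Delta_g$ is the Laplace–Beltrami operator of $g$ and $A^0 = A - \frac12 \vec{H} g$ is the tracefree second fundamental form. *)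

theory Defs
  imports "HOL-Analysis.Analysis"
begin

text \<open>Domain: the complex plane C = R^2 (coordinates x1 = Re, x2 = Im). Codomain R^3 = real^3.\<close>

text \<open>Directional (partial) derivatives. pd v F x is the Frechet derivative of F at x applied to v;
  partial_1 = pd 1, partial_2 = pd ii.\<close>
definition pd :: "complex \<Rightarrow> (complex \<Rightarrow> 'b::real_normed_vector) \<Rightarrow> complex \<Rightarrow> 'b" where
  "pd v F x = frechet_derivative F (at x) v"

definition coord :: "nat \<Rightarrow> complex" where
  "coord i = (if i = 1 then 1 else \<i>)"

fun Ck :: "nat \<Rightarrow> complex set \<Rightarrow> (complex \<Rightarrow> 'b::real_normed_vector) \<Rightarrow> bool" where
  "Ck 0 S F = continuous_on S F"
| "Ck (Suc k) S F = (F differentiable_on S \<and> (\<forall>v. Ck k S (\<lambda>x. pd v F x)))"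

definition smooth_on :: "complex set \<Rightarrow> (complex \<Rightarrow> 'b::real_normed_vector) \<Rightarrow> bool" where
  "smooth_on S F = (\<forall>k. Ck k S F)"

definition dz :: "(complex \<Rightarrow> complex) \<Rightarrow> complex \<Rightarrow> complex" where
  "dz F x = (pd 1 F x - \<i> * pd \<i> F x) / 2"

definition dzbar :: "(complex \<Rightarrow> complex) \<Rightarrow> complex \<Rightarrow> complex" where
  "dzbar F x = (pd 1 F x + \<i> * pd \<i> F x) / 2"

definition gmet :: "(complex \<Rightarrow> real^3) \<Rightarrow> nat \<Rightarrow> nat \<Rightarrow> complex \<Rightarrow> real" where
  "gmet f i j x = pd (coord i) f x \<bullet> pd (coord j) f x"

definition gdet :: "(complex \<Rightarrow> real^3) \<Rightarrow> complex \<Rightarrow> real" where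
  "gdet f x = gmet f 1 1 x * gmet f 2 2 x - gmet f 1 2 x * gmet f 2 1 x"

definition ginv :: "(complex \<Rightarrow> real^3) \<Rightarrow> nat \<Rightarrow> nat \<Rightarrow> complex \<Rightarrow> real" where
  "ginv f i j x =
     (if i = 1 \<and> j = 1 then gmet f 2 2 x
      else if i = 2 \<and> j = 2 then gmet f 1 1 x
      else - gmet f i j x) / gdet f x"

definition immersion_on :: "complex set \<Rightarrow> (complex \<Rightarrow> real^3) \<Rightarrow> bool" where
  "immersion_on S f = (smooth_on S f \<and>
     (\<forall>x\<in>S. \<forall>a b::real. a *\<^sub>R pd 1 f x + b *\<^sub>R pd \<i> f x = 0 \<longrightarrow> a = 0 \<and> b = 0))"

definition conformal_with :: "complex set \<Rightarrow> (complex \<Rightarrow> real^3) \<Rightarrow> (complex \<Rightarrow> real) \<Rightarrow> bool" where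
  "conformal_with S f u = (\<forall>x\<in>S.
     pd 1 f x \<bullet> pd 1 f x = exp (2 * u x) \<and>
     pd \<i> f x \<bullet> pd \<i> f x = exp (2 * u x) \<and>
     pd 1 f x \<bullet> pd \<i> f x = 0)"

definition unit_normal_on :: "complex set \<Rightarrow> (complex \<Rightarrow> real^3) \<Rightarrow> (complex \<Rightarrow> real^3) \<Rightarrow> bool" where
  "unit_normal_on S f \<nu> = (smooth_on S \<nu> \<and> (\<forall>x\<in>S.
     norm (\<nu> x) = 1 \<and> \<nu> x \<bullet> pd 1 f x = 0 \<and> \<nu> x \<bullet> pd \<i> f x = 0))"

definition sff :: "(complex \<Rightarrow> real^3) \<Rightarrow> (complex \<Rightarrow> real^3) \<Rightarrow> nat \<Rightarrow> nat \<Rightarrow> complex \<Rightarrow> real" where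
  "sff f \<nu> i j x = pd (coord j) (pd (coord i) f) x \<bullet> \<nu> x"

definition meanH :: "(complex \<Rightarrow> real^3) \<Rightarrow> (complex \<Rightarrow> real^3) \<Rightarrow> complex \<Rightarrow> real" where
  "meanH f \<nu> x = (\<Sum>i\<in>{1,2}. \<Sum>j\<in>{1,2}. ginv f i j x * sff f \<nu> i j x)"

definition sff0 :: "(complex \<Rightarrow> real^3) \<Rightarrow> (complex \<Rightarrow> real^3) \<Rightarrow> nat \<Rightarrow> nat \<Rightarrow> complex \<Rightarrow> real" where
  "sff0 f \<nu> i j x = sff f \<nu> i j x - 1/2 * meanH f \<nu> x * gmet f i j x"

definition normA0sq :: "(complex \<Rightarrow> real^3) \<Rightarrow> (complex \<Rightarrow> real^3) \<Rightarrow> complex \<Rightarrow> real" where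
  "normA0sq f \<nu> x = (\<Sum>i\<in>{1,2}. \<Sum>j\<in>{1,2}. \<Sum>k\<in>{1,2}. \<Sum>l\<in>{1,2}.
      ginv f i k x * ginv f j l x * sff0 f \<nu> i j x * sff0 f \<nu> k l x)"

definition laplace_g :: "(complex \<Rightarrow> real^3) \<Rightarrow> (complex \<Rightarrow> real) \<Rightarrow> complex \<Rightarrow> real" where
  "laplace_g f w x = (1 / sqrt (gdet f x)) *
     (\<Sum>i\<in>{1,2}. \<Sum>j\<in>{1,2}.
        pd (coord i) (\<lambda>y. sqrt (gdet f y) * ginv f i j y * pd (coord j) w y) x)"

text \<open>Willmore immersion: an immersion satisfying the Euler-Lagrange equation
  Delta_g H + |A^0|_g^2 H = 0 (for every smooth unit normal field; the equation is
  invariant under nu -> -nu).\<close>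
definition willmore_on :: "complex set \<Rightarrow> (complex \<Rightarrow> real^3) \<Rightarrow> bool" where
  "willmore_on S f = (immersion_on S f \<and> (\<forall>\<nu>. unit_normal_on S f \<nu> \<longrightarrow>
     (\<forall>x\<in>S. laplace_g f (meanH f \<nu>) x + normA0sq f \<nu> x * meanH f \<nu> x = 0)))"

end

theory Submission
  imports Defs
begin


lemma Ck_mono: "Ck (Suc k) S F \<Longrightarrow> Ck k S F"
proof (induction k arbitrary: F)
  case 0
  then show ?case by (simp add: differentiable_imp_continuous_on)
next
  case (Suc k)
  then show ?case by auto
qed

lemma smooth_pd[simp]: "smooth_on S F \<Longrightarrow> smooth_on S (pd v F)"
  unfolding smooth_on_def by (metis Ck.simps(2))

lemma smooth_diff_at: "open S \<Longrightarrow> x \<in> S \<Longrightarrow> smooth_on S F \<Longrightarrow> F differentiable (at x)"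
  unfolding smooth_on_def by (metis Ck.simps(2) differentiable_on_eq_differentiable_at)

lemma smooth_cont: "smooth_on S F \<Longrightarrow> continuous_on S F"
  unfolding smooth_on_def by (metis Ck.simps(1))

lemma pd_has: "F differentiable (at x) \<Longrightarrow> (F has_derivative (\<lambda>v. pd v F x)) (at x)"
  unfolding pd_def using frechet_derivative_works by (metis eta_contract_eq)

lemma pd_unique: "(F has_derivative D) (at x) \<Longrightarrow> pd v F x = D v"
  unfolding pd_def using frechet_derivative_at by metis

lemma pd_cong: "open S \<Longrightarrow> x \<in> S \<Longrightarrow> (\<And>y. y \<in> S \<Longrightarrow> F y = G y) \<Longrightarrow> pd v F x = pd v G x"
proof -
  assume a: "open S" "x \<in> S" "\<And>y. y \<in> S \<Longrightarrow> F y = G y"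
  have "\<And>D. (F has_derivative D) (at x) \<longleftrightarrow> (G has_derivative D) (at x)"
    using a has_derivative_transform_within_open by (metis (no_types, lifting))
  then show ?thesis unfolding pd_def frechet_derivative_def by simp
qed

lemma diff_cong:
  assumes a: "open S" "x \<in> S" "\<And>y. y \<in> S \<Longrightarrow> F y = G y" and d: "F differentiable (at x)"
  shows "G differentiable (at x)"
proof -
  obtain D where "(F has_derivative D) (at x)" using d by (auto simp: differentiable_def)
  then have "(G has_derivative D) (at x)"
    by (rule has_derivative_transform_within_open[OF _ a(1,2)]) (rule a(3))
  then show ?thesis by (auto simp: differentiable_def)
qed

lemma Ck_cong: "open S \<Longrightarrow> (\<And>y. y \<in> S \<Longrightarrow> F y = G y) \<Longrightarrow> Ck k S F \<Longrightarrow> Ck k S G"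
proof (induction k arbitrary: F G)
  case 0
  have "continuous_on S F = continuous_on S G" by (rule continuous_on_cong) (auto simp: 0)
  then show ?case using 0 by simp
next
  case (Suc k)
  have d: "G differentiable_on S"
    using Suc.prems diff_cong[OF Suc.prems(1) _ Suc.prems(2)] by (simp add: differentiable_on_eq_differentiable_at)
  have "Ck k S (pd v G)" for v
  proof -
    have "Ck k S (pd v F)" using Suc.prems by simp
    moreover have "\<And>y. y \<in> S \<Longrightarrow> pd v F y = pd v G y" by (rule pd_cong[OF Suc.prems(1)]) (auto intro: Suc.prems(2))
    ultimately show ?thesis using Suc.IH[OF Suc.prems(1)] by blast
  qed
  then show ?case using d by simp
qed

lemma smooth_cong: "open S \<Longrightarrow> (\<And>y. y \<in> S \<Longrightarrow> F y = G y) \<Longrightarrow> smooth_on S F \<Longrightarrow> smooth_on S G"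
  unfolding smooth_on_def using Ck_cong by blast

lemma Ck_const: "open S \<Longrightarrow> Ck k S (\<lambda>x. c)"
proof (induction k arbitrary: c)
  case 0 then show ?case by simp
next
  case (Suc k)
  have "pd v (\<lambda>x. c) = (\<lambda>y. 0)" for v unfolding pd_def by (simp add: fun_eq_iff)
  then show ?case using Suc by (simp add: differentiable_on_const)
qed

lemma smooth_const[simp]: "open S \<Longrightarrow> smooth_on S (\<lambda>x. c)"
  unfolding smooth_on_def using Ck_const by blast

lemma Ck_linear: "open S \<Longrightarrow> bounded_linear L \<Longrightarrow> Ck k S F \<Longrightarrow> Ck k S (\<lambda>x. L (F x))"
proof (induction k arbitrary: F)
  case 0 then show ?case
    by (simp add: bounded_linear.continuous_on)
next
  case (Suc k)
  have hd: "\<And>y. y \<in> S \<Longrightarrow> F differentiable (at y)"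
    using Suc.prems by (simp add: differentiable_on_eq_differentiable_at)
  have d: "\<And>y. y \<in> S \<Longrightarrow> ((\<lambda>x. L (F x)) has_derivative (\<lambda>v. L (pd v F y))) (at y)"
    using hd pd_has bounded_linear.has_derivative Suc.prems(2) by blast
  have "Ck k S (pd v (\<lambda>x. L (F x)))" for v
  proof (rule Ck_cong[OF Suc.prems(1)])
    show "Ck k S (\<lambda>y. L (pd v F y))" using Suc by simp
    show "\<And>y. y \<in> S \<Longrightarrow> L (pd v F y) = pd v (\<lambda>x. L (F x)) y"
      using pd_unique[OF d] by metis
  qed
  moreover have "(\<lambda>x. L (F x)) differentiable_on S"
    unfolding differentiable_on_eq_differentiable_at[OF Suc.prems(1)] differentiable_def using d by blast
  ultimately show ?case by simp
qed

lemma Ck_add: "open S \<Longrightarrow> Ck k S F \<Longrightarrow> Ck k S G \<Longrightarrow> Ck k S (\<lambda>x. F x + G x)"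
proof (induction k arbitrary: F G)
  case 0 then show ?case by (simp add: continuous_on_add)
next
  case (Suc k)
  have hd: "\<And>y. y \<in> S \<Longrightarrow> F differentiable (at y)" "\<And>y. y \<in> S \<Longrightarrow> G differentiable (at y)"
    using Suc.prems by (simp_all add: differentiable_on_eq_differentiable_at)
  have d: "\<And>y. y \<in> S \<Longrightarrow> ((\<lambda>x. F x + G x) has_derivative (\<lambda>v. pd v F y + pd v G y)) (at y)"
    using hd pd_has has_derivative_add by blast
  have "Ck k S (pd v (\<lambda>x. F x + G x))" for v
  proof (rule Ck_cong[OF Suc.prems(1)])
    show "Ck k S (\<lambda>y. pd v F y + pd v G y)" using Suc by simp
    show "\<And>y. y \<in> S \<Longrightarrow> pd v F y + pd v G y = pd v (\<lambda>x. F x + G x) y"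
      using pd_unique[OF d] by metis
  qed
  moreover have "(\<lambda>x. F x + G x) differentiable_on S"
    unfolding differentiable_on_eq_differentiable_at[OF Suc.prems(1)] differentiable_def using d by blast
  ultimately show ?case by simp
qed

lemma Ck_bilinear: "open S \<Longrightarrow> bounded_bilinear b \<Longrightarrow> Ck k S F \<Longrightarrow> Ck k S G \<Longrightarrow> Ck k S (\<lambda>x. b (F x) (G x))"
proof (induction k arbitrary: F G)
  case 0 then show ?case by (simp add: bounded_bilinear.continuous_on)
next
  case (Suc k)
  have hd: "\<And>y. y \<in> S \<Longrightarrow> F differentiable (at y)" "\<And>y. y \<in> S \<Longrightarrow> G differentiable (at y)"
    using Suc.prems by (simp_all add: differentiable_on_eq_differentiable_at)
  have d: "\<And>y. y \<in> S \<Longrightarrow> ((\<lambda>x. b (F x) (G x)) has_derivative (\<lambda>v. b (F y) (pd v G y) + b (pd v F y) (G y))) (at y)"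
    using bounded_bilinear.FDERIV[OF Suc.prems(2) pd_has[OF hd(1)] pd_has[OF hd(2)]] by blast
  have "Ck k S (pd v (\<lambda>x. b (F x) (G x)))" for v
  proof (rule Ck_cong[OF Suc.prems(1)])
    have FG: "Ck k S F" "Ck k S G" using Suc.prems Ck_mono by blast+
    have pFG: "Ck k S (pd v F)" "Ck k S (pd v G)" using Suc.prems by auto
    show "Ck k S (\<lambda>y. b (F y) (pd v G y) + b (pd v F y) (G y))"
      by (rule Ck_add[OF Suc.prems(1) Suc.IH[OF Suc.prems(1,2) FG(1) pFG(2)] Suc.IH[OF Suc.prems(1,2) pFG(1) FG(2)]])
    show "\<And>y. y \<in> S \<Longrightarrow> b (F y) (pd v G y) + b (pd v F y) (G y) = pd v (\<lambda>x. b (F x) (G x)) y"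
      using pd_unique[OF d] by metis
  qed
  moreover have "(\<lambda>x. b (F x) (G x)) differentiable_on S"
    unfolding differentiable_on_eq_differentiable_at[OF Suc.prems(1)] differentiable_def using d by blast
  ultimately show ?case by simp
qed

lemma Ck_inverse:
  fixes F :: "complex \<Rightarrow> real"
  assumes "open S" "smooth_on S F" "\<And>x. x \<in> S \<Longrightarrow> F x \<noteq> 0"
  shows "Ck k S (\<lambda>x. inverse (F x))"
proof (induction k)
  case 0 then show ?case using assms
    by (simp add: continuous_on_inverse smooth_cont)
next
  case (Suc k)
  have hd: "\<And>y. y \<in> S \<Longrightarrow> F differentiable (at y)"
    using assms smooth_diff_at by blast
  have d: "\<And>y. y \<in> S \<Longrightarrow> ((\<lambda>x. inverse (F x)) has_derivative (\<lambda>v. - (inverse (F y) * pd v F y * inverse (F y)))) (at y)"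
    using Deriv.has_derivative_inverse[OF assms(3) pd_has[OF hd]] by blast
  have "Ck k S (pd v (\<lambda>x. inverse (F x)))" for v
  proof (rule Ck_cong[OF assms(1)])
    have "Ck k S (pd v F)" using assms smooth_pd unfolding smooth_on_def by blast
    then have "Ck k S (\<lambda>y. inverse (F y) * pd v F y)"
      by (rule Ck_bilinear[OF assms(1) bounded_bilinear_mult Suc])
    then have "Ck k S (\<lambda>y. (inverse (F y) * pd v F y) * inverse (F y))"
      by (rule Ck_bilinear[OF assms(1) bounded_bilinear_mult _ Suc])
    then show "Ck k S (\<lambda>y. - (inverse (F y) * pd v F y * inverse (F y)))"
      by (rule Ck_linear[OF assms(1) bounded_linear_minus[OF bounded_linear_ident]])
    show "\<And>y. y \<in> S \<Longrightarrow> - (inverse (F y) * pd v F y * inverse (F y)) = pd v (\<lambda>x. inverse (F x)) y"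
      using pd_unique[OF d] by metis
  qed
  moreover have "(\<lambda>x. inverse (F x)) differentiable_on S"
    unfolding differentiable_on_eq_differentiable_at[OF assms(1)] differentiable_def using d by blast
  ultimately show ?case by simp
qed



lemma smooth_linear:
  assumes "open S" "bounded_linear L" "smooth_on S F" shows "smooth_on S (\<lambda>x. L (F x))"
  unfolding smooth_on_def
proof
  fix k show "Ck k S (\<lambda>x. L (F x))" by (rule Ck_linear[OF assms(1,2) assms(3)[unfolded smooth_on_def, rule_format]])
qed

lemma smooth_bilinear:
  assumes "open S" "bounded_bilinear b" "smooth_on S F" "smooth_on S G" shows "smooth_on S (\<lambda>x. b (F x) (G x))"
  unfolding smooth_on_def
proof
  fix k show "Ck k S (\<lambda>x. b (F x) (G x))"
    by (rule Ck_bilinear[OF assms(1,2) assms(3)[unfolded smooth_on_def, rule_format] assms(4)[unfolded smooth_on_def, rule_format]])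
qed

lemma smooth_add[simp]:
  assumes "open S" "smooth_on S F" "smooth_on S G" shows "smooth_on S (\<lambda>x. F x + G x)"
  unfolding smooth_on_def
proof
  fix k show "Ck k S (\<lambda>x. F x + G x)"
    by (rule Ck_add[OF assms(1) assms(2)[unfolded smooth_on_def, rule_format] assms(3)[unfolded smooth_on_def, rule_format]])
qed

lemma smooth_minus[simp]: "open S \<Longrightarrow> smooth_on S F \<Longrightarrow> smooth_on S (\<lambda>x. - F x)"
  by (rule smooth_linear[OF _ bounded_linear_minus[OF bounded_linear_ident]])

lemma smooth_diff[simp]: "open S \<Longrightarrow> smooth_on S F \<Longrightarrow> smooth_on S G \<Longrightarrow> smooth_on S (\<lambda>x. F x - G x)"
proof -
  assume a: "open S" "smooth_on S F" "smooth_on S G"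
  show ?thesis using smooth_add[OF a(1,2) smooth_minus[OF a(1,3)]] by simp
qed

lemma smooth_mult[simp]:
  fixes F G :: "complex \<Rightarrow> 'a::real_normed_algebra"
  shows "open S \<Longrightarrow> smooth_on S F \<Longrightarrow> smooth_on S G \<Longrightarrow> smooth_on S (\<lambda>x. F x * G x)"
  by (rule smooth_bilinear[OF _ bounded_bilinear_mult])

lemma smooth_inner[simp]:
  "open S \<Longrightarrow> smooth_on S F \<Longrightarrow> smooth_on S G \<Longrightarrow> smooth_on S (\<lambda>x. inner (F x) (G x))"
  by (rule smooth_bilinear[OF _ bounded_bilinear_inner])

lemma smooth_scaleR[simp]:
  "open S \<Longrightarrow> smooth_on S F \<Longrightarrow> smooth_on S G \<Longrightarrow> smooth_on S (\<lambda>x. F x *\<^sub>R G x)"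
  by (rule smooth_bilinear[OF _ bounded_bilinear_scaleR])

lemma smooth_of_real[simp]:
  "open S \<Longrightarrow> smooth_on S F \<Longrightarrow> smooth_on S (\<lambda>x. complex_of_real (F x))"
  by (rule smooth_linear[OF _ bounded_linear_of_real])

lemma smooth_cnj[simp]:
  "open S \<Longrightarrow> smooth_on S F \<Longrightarrow> smooth_on S (\<lambda>x. cnj (F x))"
  by (rule smooth_linear[OF _ bounded_linear_cnj])

lemma smooth_inverse:
  fixes F :: "complex \<Rightarrow> real"
  shows "open S \<Longrightarrow> smooth_on S F \<Longrightarrow> (\<And>x. x \<in> S \<Longrightarrow> F x \<noteq> 0) \<Longrightarrow> smooth_on S (\<lambda>x. inverse (F x))"
  unfolding smooth_on_def using Ck_inverse[unfolded smooth_on_def, of S F] by blast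

lemma pd_lin:
  assumes "open S" "x \<in> S" "smooth_on S F" "bounded_linear L"
  shows "pd v (\<lambda>y. L (F y)) x = L (pd v F x)"
  using pd_unique[OF bounded_linear.has_derivative[OF assms(4) pd_has[OF smooth_diff_at[OF assms(1-3)]]]] .

lemma pd_bil:
  assumes "open S" "x \<in> S" "smooth_on S F" "smooth_on S G" "bounded_bilinear b"
  shows "pd v (\<lambda>y. b (F y) (G y)) x = b (F x) (pd v G x) + b (pd v F x) (G x)"
  using pd_unique[OF bounded_bilinear.FDERIV[OF assms(5) pd_has[OF smooth_diff_at[OF assms(1-3)]] pd_has[OF smooth_diff_at[OF assms(1,2,4)]]]] .

lemma pd_add[simp]:
  assumes "open S" "x \<in> S" "smooth_on S F" "smooth_on S G"
  shows "pd v (\<lambda>y. F y + G y) x = pd v F x + pd v G x"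
  using pd_unique[OF has_derivative_add[OF pd_has[OF smooth_diff_at[OF assms(1-3)]] pd_has[OF smooth_diff_at[OF assms(1,2,4)]]]] .

lemma pd_diff[simp]:
  assumes "open S" "x \<in> S" "smooth_on S F" "smooth_on S G"
  shows "pd v (\<lambda>y. F y - G y) x = pd v F x - pd v G x"
  using pd_unique[OF has_derivative_diff[OF pd_has[OF smooth_diff_at[OF assms(1-3)]] pd_has[OF smooth_diff_at[OF assms(1,2,4)]]]] .

lemma pd_minus[simp]:
  assumes "open S" "x \<in> S" "smooth_on S F"
  shows "pd v (\<lambda>y. - F y) x = - pd v F x"
  using pd_unique[OF has_derivative_minus[OF pd_has[OF smooth_diff_at[OF assms(1-3)]]]] .

lemma pd_const[simp]: "pd v (\<lambda>y. c) x = 0"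
  unfolding pd_def by simp

lemma pd_mult[simp]:
  fixes F G :: "complex \<Rightarrow> 'a::real_normed_algebra"
  assumes "open S" "x \<in> S" "smooth_on S F" "smooth_on S G"
  shows "pd v (\<lambda>y. F y * G y) x = F x * pd v G x + pd v F x * G x"
  by (rule pd_bil[OF assms bounded_bilinear_mult])

lemma pd_inner[simp]:
  assumes "open S" "x \<in> S" "smooth_on S F" "smooth_on S G"
  shows "pd v (\<lambda>y. inner (F y) (G y)) x = inner (F x) (pd v G x) + inner (pd v F x) (G x)"
  by (rule pd_bil[OF assms bounded_bilinear_inner])

lemma pd_of_real[simp]:
  assumes "open S" "x \<in> S" "smooth_on S F"
  shows "pd v (\<lambda>y. complex_of_real (F y)) x = complex_of_real (pd v F x)"
  by (rule pd_lin[OF assms bounded_linear_of_real])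

lemma pd_inverse:
  fixes F :: "complex \<Rightarrow> real"
  assumes "open S" "x \<in> S" "smooth_on S F" "F x \<noteq> 0"
  shows "pd v (\<lambda>y. inverse (F y)) x = - (inverse (F x) * pd v F x * inverse (F x))"
  using pd_unique[OF Deriv.has_derivative_inverse[OF assms(4) pd_has[OF smooth_diff_at[OF assms(1-3)]]]] .

lemma pd_scale_dir:
  assumes "F differentiable (at x)"
  shows "pd (c *\<^sub>R v) F x = c *\<^sub>R pd v F x"
proof -
  have "bounded_linear (\<lambda>v. pd v F x)" using pd_has[OF assms] has_derivative_bounded_linear by blast
  show ?thesis by (rule linear_cmul[OF bounded_linear.linear[OF \<open>bounded_linear (\<lambda>v. pd v F x)\<close>]])
qed

lemma line_deriv:
  fixes G :: "complex \<Rightarrow> real"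
  assumes "G differentiable (at (p + t *\<^sub>R w))"
  shows "((\<lambda>s. G (p + s *\<^sub>R w)) has_real_derivative pd w G (p + t *\<^sub>R w)) (at t)"
proof -
  have l: "((\<lambda>s. p + s *\<^sub>R w) has_derivative (\<lambda>s. s *\<^sub>R w)) (at t)"
    by (auto intro!: derivative_eq_intros)
  have "((G \<circ> (\<lambda>s. p + s *\<^sub>R w)) has_derivative ((\<lambda>v. pd v G (p + t *\<^sub>R w)) \<circ> (\<lambda>s. s *\<^sub>R w))) (at t)"
    by (rule diff_chain_at[OF l pd_has[OF assms]])
  moreover have "((\<lambda>v. pd v G (p + t *\<^sub>R w)) \<circ> (\<lambda>s. s *\<^sub>R w)) = (\<lambda>s. pd w G (p + t *\<^sub>R w) * s)"
    using pd_scale_dir[OF assms] by (auto simp: fun_eq_iff)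
  ultimately show ?thesis by (simp add: has_field_derivative_def o_def)
qed

lemma schwarz_side:
  fixes g :: "complex \<Rightarrow> real"
  assumes S: "open S" "smooth_on S g" and h: "h > 0"
    and inS: "\<And>s t. 0 \<le> s \<Longrightarrow> s \<le> h \<Longrightarrow> 0 \<le> t \<Longrightarrow> t \<le> h \<Longrightarrow> x + s *\<^sub>R u + t *\<^sub>R v \<in> S"
  shows "\<exists>a b. 0 < a \<and> a < h \<and> 0 < b \<and> b < h \<and>
     g (x + h *\<^sub>R u + h *\<^sub>R v) - g (x + h *\<^sub>R u) - g (x + h *\<^sub>R v) + g x = h * h * pd v (pd u g) (x + a *\<^sub>R u + b *\<^sub>R v)"
proof -
  define \<phi> where "\<phi> s = g ((x + h *\<^sub>R v) + s *\<^sub>R u) - g (x + s *\<^sub>R u)" for s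
  have "(\<phi> has_real_derivative (pd u g ((x + h *\<^sub>R v) + s *\<^sub>R u) - pd u g (x + s *\<^sub>R u))) (at s)"
    if "0 \<le> s" "s \<le> h" for s
  proof -
    have "x + h *\<^sub>R v + s *\<^sub>R u = x + s *\<^sub>R u + h *\<^sub>R v" by (simp only: add_ac)
    note eq = this
    have i1: "(x + h *\<^sub>R v) + s *\<^sub>R u \<in> S" using inS[of s h] that h by (subst eq) simp
    have i2: "x + s *\<^sub>R u \<in> S" using inS[of s 0] that h by simp
    show ?thesis unfolding \<phi>_def
      by (intro DERIV_diff line_deriv smooth_diff_at[OF S(1) _ S(2)] i1 i2)
  qed
  from MVT2[OF h this] obtain a where a: "0 < a" "a < h"
    "\<phi> h - \<phi> 0 = (h - 0) * (pd u g ((x + h *\<^sub>R v) + a *\<^sub>R u) - pd u g (x + a *\<^sub>R u))" by blast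
  define \<psi> where "\<psi> t = pd u g ((x + a *\<^sub>R u) + t *\<^sub>R v)" for t
  have "(\<psi> has_real_derivative pd v (pd u g) ((x + a *\<^sub>R u) + t *\<^sub>R v)) (at t)"
    if "0 \<le> t" "t \<le> h" for t
  proof -
    have i1: "(x + a *\<^sub>R u) + t *\<^sub>R v \<in> S" using inS[of a t] that a by simp
    show ?thesis unfolding \<psi>_def
      by (intro line_deriv smooth_diff_at[OF S(1) i1] smooth_pd S(2))
  qed
  from MVT2[OF h this] obtain b where b: "0 < b" "b < h"
    "\<psi> h - \<psi> 0 = (h - 0) * pd v (pd u g) ((x + a *\<^sub>R u) + b *\<^sub>R v)" by blast
  have c1: "x + h *\<^sub>R v + h *\<^sub>R u = x + h *\<^sub>R u + h *\<^sub>R v" by (simp only: add_ac)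
  have c2: "x + h *\<^sub>R v + a *\<^sub>R u = x + a *\<^sub>R u + h *\<^sub>R v" by (simp only: add_ac)
  have "g (x + h *\<^sub>R u + h *\<^sub>R v) - g (x + h *\<^sub>R u) - g (x + h *\<^sub>R v) + g x = \<phi> h - \<phi> 0"
    unfolding \<phi>_def c1 by simp
  also have "\<dots> = h * (\<psi> h - \<psi> 0)" using a(3) unfolding \<psi>_def c2 by simp
  also have "\<dots> = h * h * pd v (pd u g) (x + a *\<^sub>R u + b *\<^sub>R v)" using b(3) by simp
  finally show ?thesis using a b by blast
qed

lemma abs_absurd: "\<bar>p - a\<bar> < \<bar>a - b\<bar> / 2 \<Longrightarrow> \<bar>q - b\<bar> < \<bar>a - (b::real)\<bar> / 2 \<Longrightarrow> p = q \<Longrightarrow> False"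
proof -
  assume a: "\<bar>p - a\<bar> < \<bar>a - b\<bar> / 2" "\<bar>q - b\<bar> < \<bar>a - b\<bar> / 2" "p = q"
  have "a - b = (q - b) - (p - a)" using a(3) by simp
  then have "\<bar>a - b\<bar> \<le> \<bar>q - b\<bar> + \<bar>p - a\<bar>" using abs_triangle_ineq4[of "q - b" "p - a"] by simp
  moreover have "\<And>X Y Z::real. X \<le> Y + Z \<Longrightarrow> Z < X / 2 \<Longrightarrow> Y < X / 2 \<Longrightarrow> False" by linarith
  ultimately show False using a(1,2) by blast
qed

lemma ball_add: "norm (w::'a::real_normed_vector) < r \<Longrightarrow> x + w \<in> ball x r"
  by (simp add: dist_norm)

lemma schwarz_real:
  fixes g :: "complex \<Rightarrow> real"
  assumes S: "open S" "x \<in> S" "smooth_on S g"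
  shows "pd v (pd u g) x = pd u (pd v g) x"
proof (rule ccontr)
  assume ne: "pd v (pd u g) x \<noteq> pd u (pd v g) x"
  define e where "e = \<bar>pd v (pd u g) x - pd u (pd v g) x\<bar> / 2"
  have e: "e > 0" using ne by (simp add: e_def)
  obtain r where r: "r > 0" "ball x r \<subseteq> S" using S openE by blast
  have "smooth_on S (pd v (pd u g))" "smooth_on S (pd u (pd v g))" using S(3) by simp_all
  then have "continuous_on S (pd v (pd u g))" "continuous_on S (pd u (pd v g))"
    by (simp_all add: smooth_cont)
  then have c1: "isCont (pd v (pd u g)) x" "isCont (pd u (pd v g)) x"
    using continuous_on_eq_continuous_at[OF S(1)] S(2) by blast+
  obtain d1 where d1: "d1 > 0" "\<And>y. dist y x < d1 \<Longrightarrow> dist (pd v (pd u g) y) (pd v (pd u g) x) < e"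
    using c1(1) e unfolding continuous_at_eps_delta by blast
  obtain d2 where d2: "d2 > 0" "\<And>y. dist y x < d2 \<Longrightarrow> dist (pd u (pd v g) y) (pd u (pd v g) x) < e"
    using c1(2) e unfolding continuous_at_eps_delta by blast
  define K where "K = norm u + norm v + 1"
  have K: "K > 0" unfolding K_def using norm_ge_zero[of u] norm_ge_zero[of v] by linarith
  define m where "m = min r (min d1 d2)"
  have m: "m > 0" using r d1 d2 by (simp add: m_def)
  define h where "h = m / (2 * K)"
  have h: "h > 0" using m K by (simp add: h_def)
  have small0: "norm (s *\<^sub>R a + t *\<^sub>R b) < m" if "0 \<le> s" "s \<le> h" "0 \<le> t" "t \<le> h"
    and ab: "norm a + norm b = norm u + norm v" for s t a b
  proof -
    have "norm (s *\<^sub>R a + t *\<^sub>R b) \<le> norm (s *\<^sub>R a) + norm (t *\<^sub>R b)" by (rule norm_triangle_ineq)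
    also have "\<dots> = s * norm a + t * norm b" using that by simp
    also have "\<dots> \<le> h * norm a + h * norm b"
      using that by (intro add_mono mult_right_mono) auto
    also have "\<dots> = h * (norm a + norm b)" by (simp add: distrib_left)
    also have "\<dots> = h * (norm u + norm v)" using ab by simp
    also have "\<dots> < h * K" unfolding K_def using h by (simp add: distrib_left)
    also have "\<dots> = m / 2" using K by (simp add: h_def)
    also have "\<dots> < m" using m by simp
    finally show ?thesis .
  qed
  have small1: "norm (s *\<^sub>R u + t *\<^sub>R v) < m" if "0 \<le> s" "s \<le> h" "0 \<le> t" "t \<le> h" for s t
    using small0[OF that, of u v] by simp
  have small2: "norm (s *\<^sub>R v + t *\<^sub>R u) < m" if "0 \<le> s" "s \<le> h" "0 \<le> t" "t \<le> h" for s t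
    using small0[OF that, of v u] by (simp add: add.commute)
  have mr: "m \<le> r" "m \<le> d1" "m \<le> d2" by (simp_all add: m_def)
  have inS1: "x + s *\<^sub>R u + t *\<^sub>R v \<in> S" if "0 \<le> s" "s \<le> h" "0 \<le> t" "t \<le> h" for s t
  proof -
    have "norm (s *\<^sub>R u + t *\<^sub>R v) < r" using small1[OF that] mr by simp
    then have "x + s *\<^sub>R u + t *\<^sub>R v \<in> ball x r" unfolding add.assoc by (rule ball_add)
    then show ?thesis using r by blast
  qed
  have inS2: "x + s *\<^sub>R v + t *\<^sub>R u \<in> S" if "0 \<le> s" "s \<le> h" "0 \<le> t" "t \<le> h" for s t
  proof -
    have "norm (s *\<^sub>R v + t *\<^sub>R u) < r" using small2[OF that] mr by simp
    then have "x + s *\<^sub>R v + t *\<^sub>R u \<in> ball x r" unfolding add.assoc by (rule ball_add)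
    then show ?thesis using r by blast
  qed
  obtain a1 b1 where s1: "0 < a1" "a1 < h" "0 < b1" "b1 < h"
     "g (x + h *\<^sub>R u + h *\<^sub>R v) - g (x + h *\<^sub>R u) - g (x + h *\<^sub>R v) + g x = h * h * pd v (pd u g) (x + a1 *\<^sub>R u + b1 *\<^sub>R v)"
    using schwarz_side[OF S(1,3) h inS1] by blast
  obtain a2 b2 where s2: "0 < a2" "a2 < h" "0 < b2" "b2 < h"
     "g (x + h *\<^sub>R v + h *\<^sub>R u) - g (x + h *\<^sub>R v) - g (x + h *\<^sub>R u) + g x = h * h * pd u (pd v g) (x + a2 *\<^sub>R v + b2 *\<^sub>R u)"
    using schwarz_side[OF S(1,3) h inS2] by blast
  have c: "x + h *\<^sub>R v + h *\<^sub>R u = x + h *\<^sub>R u + h *\<^sub>R v" by (simp only: add_ac)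
  have "h * h * pd v (pd u g) (x + a1 *\<^sub>R u + b1 *\<^sub>R v) = h * h * pd u (pd v g) (x + a2 *\<^sub>R v + b2 *\<^sub>R u)"
    using s1(5) s2(5) unfolding c by linarith
  then have eq: "pd v (pd u g) (x + a1 *\<^sub>R u + b1 *\<^sub>R v) = pd u (pd v g) (x + a2 *\<^sub>R v + b2 *\<^sub>R u)"
    using h by simp
  have "norm (a1 *\<^sub>R u + b1 *\<^sub>R v) < m" using small1[of a1 b1] s1 by simp
  then have "dist (x + a1 *\<^sub>R u + b1 *\<^sub>R v) x < d1" using mr by (simp add: dist_norm add.assoc)
  then have 1: "dist (pd v (pd u g) (x + a1 *\<^sub>R u + b1 *\<^sub>R v)) (pd v (pd u g) x) < e" using d1 by blast
  have "norm (a2 *\<^sub>R v + b2 *\<^sub>R u) < m" using small2[of a2 b2] s2 by simp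
  then have "dist (x + a2 *\<^sub>R v + b2 *\<^sub>R u) x < d2" using mr by (simp add: dist_norm add.assoc)
  then have 2: "dist (pd u (pd v g) (x + a2 *\<^sub>R v + b2 *\<^sub>R u)) (pd u (pd v g) x) < e" using d2 by blast
  from abs_absurd[OF 1[unfolded e_def dist_real_def] 2[unfolded e_def dist_real_def] eq] show False .
qed



lemma smooth_divc[simp]:
  fixes F :: "complex \<Rightarrow> 'a::real_normed_field"
  shows "open S \<Longrightarrow> smooth_on S F \<Longrightarrow> smooth_on S (\<lambda>x. F x / c)"
proof -
  assume a: "open S" "smooth_on S F"
  have "smooth_on S (\<lambda>x. F x * inverse c)" using a by simp
  then show ?thesis by (simp add: divide_inverse)
qed

lemma pd_divc[simp]:
  fixes F :: "complex \<Rightarrow> 'a::real_normed_field"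
  assumes "open S" "x \<in> S" "smooth_on S F"
  shows "pd v (\<lambda>y. F y / c) x = pd v F x / c"
proof -
  have "pd v (\<lambda>y. F y * inverse c) x = pd v F x * inverse c" using assms by simp
  then show ?thesis by (simp add: divide_inverse)
qed

lemma pd_inner_const:
  assumes "open S" "x \<in> S" "smooth_on S G"
  shows "pd w (\<lambda>y. inner (G y) c) x = inner (pd w G x) c"
  using pd_inner[OF assms smooth_const[OF assms(1)]] by simp

lemma schwarz:
  fixes G :: "complex \<Rightarrow> 'b::euclidean_space"
  assumes S: "open S" "x \<in> S" "smooth_on S G"
  shows "pd v (pd u G) x = pd u (pd v G) x"
proof (rule euclidean_eqI)
  fix b :: 'b assume "b \<in> Basis"
  define g where "g y = inner (G y) b" for y
  have sg: "smooth_on S g" unfolding g_def using S by simp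
  have pg: "\<And>w y. y \<in> S \<Longrightarrow> pd w g y = inner (pd w G y) b"
    unfolding g_def using pd_inner_const[OF S(1) _ S(3)] by blast
  have "pd v (pd u g) x = pd v (\<lambda>y. inner (pd u G y) b) x"
    by (rule pd_cong[OF S(1,2)]) (simp add: pg)
  also have "\<dots> = inner (pd v (pd u G) x) b"
    by (rule pd_inner_const[OF S(1,2)]) (simp add: S(3))
  finally have 1: "pd v (pd u g) x = inner (pd v (pd u G) x) b" .
  have "pd u (pd v g) x = pd u (\<lambda>y. inner (pd v G y) b) x"
    by (rule pd_cong[OF S(1,2)]) (simp add: pg)
  also have "\<dots> = inner (pd u (pd v G) x) b"
    by (rule pd_inner_const[OF S(1,2)]) (simp add: S(3))
  finally have 2: "pd u (pd v g) x = inner (pd u (pd v G) x) b" .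
  show "inner (pd v (pd u G) x) b = inner (pd u (pd v G) x) b"
    using schwarz_real[OF S(1,2) sg, of v u] 1 2 by simp
qed

lemma orth3_decomp:
  fixes e1 e2 e3 a :: "real^3"
  assumes o: "inner e1 e2 = 0" "inner e1 e3 = 0" "inner e2 e3 = 0"
    and nz: "e1 \<noteq> 0" "e2 \<noteq> 0" "e3 \<noteq> 0"
  shows "a = (inner a e1 / inner e1 e1) *\<^sub>R e1 + (inner a e2 / inner e2 e2) *\<^sub>R e2 + (inner a e3 / inner e3 e3) *\<^sub>R e3"
proof (rule ccontr)
  define r where "r = a - ((inner a e1 / inner e1 e1) *\<^sub>R e1 + (inner a e2 / inner e2 e2) *\<^sub>R e2 + (inner a e3 / inner e3 e3) *\<^sub>R e3)"
  assume "\<not> ?thesis"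
  then have rnz: "r \<noteq> 0" unfolding r_def by simp
  have p1: "inner e1 e1 \<noteq> 0" "inner e2 e2 \<noteq> 0" "inner e3 e3 \<noteq> 0" using nz by simp_all
  have o': "inner e2 e1 = 0" "inner e3 e1 = 0" "inner e3 e2 = 0" using o by (simp_all add: inner_commute)
  have r1: "inner r e1 = 0" unfolding r_def using p1 o o' by (simp add: inner_diff_left inner_add_left)
  have r2: "inner r e2 = 0" unfolding r_def using p1 o o' by (simp add: inner_diff_left inner_add_left)
  have r3: "inner r e3 = 0" unfolding r_def using p1 o o' by (simp add: inner_diff_left inner_add_left)
  have rr: "inner r r \<noteq> 0" using rnz by simp
  have d: "e1 \<noteq> e2" "e1 \<noteq> e3" "e2 \<noteq> e3" "e1 \<noteq> r" "e2 \<noteq> r" "e3 \<noteq> r"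
    using o p1 r1 r2 r3 by auto
  let ?B = "{e1, e2, e3, r}"
  have "pairwise orthogonal ?B"
    unfolding pairwise_def orthogonal_def using o o' r1 r2 r3 by (auto simp: inner_commute)
  moreover have "0 \<notin> ?B" using nz rnz by auto
  ultimately have "independent ?B" by (rule pairwise_orthogonal_independent)
  then have "card ?B \<le> DIM(real^3)" using independent_bound by blast
  moreover have "card ?B = 4" using d by auto
  ultimately show False by simp
qed

lemma orth3_inner:
  fixes e1 e2 e3 a b :: "real^3"
  assumes "inner e1 e2 = 0" "inner e1 e3 = 0" "inner e2 e3 = 0" "e1 \<noteq> 0" "e2 \<noteq> 0" "e3 \<noteq> 0"
  shows "inner a b = inner a e1 * inner b e1 / inner e1 e1 + inner a e2 * inner b e2 / inner e2 e2 + inner a e3 * inner b e3 / inner e3 e3"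
proof -
  have "inner a b = inner ((inner a e1 / inner e1 e1) *\<^sub>R e1 + (inner a e2 / inner e2 e2) *\<^sub>R e2 + (inner a e3 / inner e3 e3) *\<^sub>R e3) b"
    using orth3_decomp[OF assms, of a] by simp
  also have "\<dots> = inner a e1 * inner b e1 / inner e1 e1 + inner a e2 * inner b e2 / inner e2 e2 + inner a e3 * inner b e3 / inner e3 e3"
    by (simp add: inner_add_left inner_commute[of b])
  finally show ?thesis .
qed



lemma sum12: "(\<Sum>i\<in>{1::nat,2}. F i) = F 1 + F 2" by simp

lemma bl_mat1: "bounded_linear (\<lambda>c::complex. vector [vector [0, c], vector [0, 0]] :: complex^2^2)"
  unfolding linear_conv_bounded_linear[symmetric]
  by (rule linearI) (simp_all add: vec_eq_iff forall_2)

lemma bl_mat2: "bounded_linear (\<lambda>c::complex. vector [vector [0, 0], vector [c, 0]] :: complex^2^2)"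
  unfolding linear_conv_bounded_linear[symmetric]
  by (rule linearI) (simp_all add: vec_eq_iff forall_2)

lemma main_geom:
  fixes f \<nu> :: "complex \<Rightarrow> real^3" and S :: "complex set"
  assumes S: "open S"
    and sf: "smooth_on S f" and sn: "smooth_on S \<nu>"
    and c1: "\<And>x. x \<in> S \<Longrightarrow> inner (pd \<i> f x) (pd \<i> f x) = inner (pd 1 f x) (pd 1 f x)"
    and c2: "\<And>x. x \<in> S \<Longrightarrow> inner (pd 1 f x) (pd \<i> f x) = 0"
    and c3: "\<And>x. x \<in> S \<Longrightarrow> inner (pd 1 f x) (pd 1 f x) > 0"
    and n1: "\<And>x. x \<in> S \<Longrightarrow> inner (\<nu> x) (\<nu> x) = 1"
    and n2: "\<And>x. x \<in> S \<Longrightarrow> inner (\<nu> x) (pd 1 f x) = 0"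
    and n3: "\<And>x. x \<in> S \<Longrightarrow> inner (\<nu> x) (pd \<i> f x) = 0"
    and will: "\<And>x. x \<in> S \<Longrightarrow> laplace_g f (meanH f \<nu>) x + normA0sq f \<nu> x * meanH f \<nu> x = 0"
  shows "\<exists>M :: complex \<Rightarrow> complex^2^2. smooth_on S M \<and>
    (\<forall>z\<in>S.
      (let \<phi> = (\<lambda>y. complex_of_real (sff0 f \<nu> 1 1 y) - \<i> * complex_of_real (sff0 f \<nu> 1 2 y));
           Hz = dz (\<lambda>y. complex_of_real (meanH f \<nu> y))
       in vector [dzbar \<phi> z, dzbar Hz z] = M z *v vector [\<phi> z, Hz z]))"
proof -
  define f1 where "f1 = pd 1 f"
  define f2 where "f2 = pd \<i> f"
  define E where "E = (\<lambda>y. inner (f1 y) (f1 y))"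
  define h11 where "h11 = (\<lambda>y. inner (pd 1 f1 y) (\<nu> y))"
  define h12 where "h12 = (\<lambda>y. inner (pd \<i> f1 y) (\<nu> y))"
  define h21 where "h21 = (\<lambda>y. inner (pd 1 f2 y) (\<nu> y))"
  define h22 where "h22 = (\<lambda>y. inner (pd \<i> f2 y) (\<nu> y))"
  define P where "P = (\<lambda>y. (h11 y - h22 y) / 2)"
  define Hs where "Hs = (\<lambda>y. (h11 y + h22 y) * inverse (E y))"
  define Kf where "Kf = (\<lambda>y. Hs y * inverse (E y) / 2)"
  define M21 where "M21 = (\<lambda>y. - complex_of_real (Kf y) * (complex_of_real (P y) + \<i> * complex_of_real (h12 y)))"
  define M where "M = (\<lambda>y. vector [vector [0, complex_of_real (E y / 2)], vector [M21 y, 0]] :: complex^2^2)"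
  have sf1: "smooth_on S f1" and sf2: "smooth_on S f2" unfolding f1_def f2_def using sf by simp_all
  have sE: "smooth_on S E" unfolding E_def using S sf1 by simp
  have Epos: "\<And>y. y \<in> S \<Longrightarrow> E y > 0" unfolding E_def f1_def using c3 by simp
  have E2: "\<And>y. y \<in> S \<Longrightarrow> inner (f2 y) (f2 y) = E y" unfolding E_def f1_def f2_def using c1 by simp
  have f12: "\<And>y. y \<in> S \<Longrightarrow> inner (f1 y) (f2 y) = 0" unfolding f1_def f2_def using c2 by simp
  have nf1: "\<And>y. y \<in> S \<Longrightarrow> inner (\<nu> y) (f1 y) = 0" unfolding f1_def using n2 by simp
  have nf2: "\<And>y. y \<in> S \<Longrightarrow> inner (\<nu> y) (f2 y) = 0" unfolding f2_def using n3 by simp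
  have sh: "smooth_on S h11" "smooth_on S h12" "smooth_on S h21" "smooth_on S h22"
    unfolding h11_def h12_def h21_def h22_def using S sf1 sf2 sn by simp_all
  have sP: "smooth_on S P" unfolding P_def using S sh by simp
  have sEi: "smooth_on S (\<lambda>y. inverse (E y))"
    using smooth_inverse[OF S sE] Epos by (metis less_irrefl)
  have sHs: "smooth_on S Hs" unfolding Hs_def using S sh sEi by simp
  have sK: "smooth_on S Kf" unfolding Kf_def using S sEi sHs by simp
  have sM21: "smooth_on S M21" unfolding M21_def using S sh sK sP by simp
  have "smooth_on S (\<lambda>y. (vector [vector [0, complex_of_real (E y / 2)], vector [0, 0]] :: complex^2^2)
      + vector [vector [0, 0], vector [M21 y, 0]])"
    using smooth_linear[OF S bl_mat1] smooth_linear[OF S bl_mat2] S sE sM21 by simp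
  moreover have "(\<lambda>y. (vector [vector [0, complex_of_real (E y / 2)], vector [0, 0]] :: complex^2^2)
      + vector [vector [0, 0], vector [M21 y, 0]]) = M"
    unfolding M_def by (simp add: vec_eq_iff forall_2 fun_eq_iff)
  ultimately have sM: "smooth_on S M" by simp
  have sym: "\<And>y. y \<in> S \<Longrightarrow> pd \<i> f1 y = pd 1 f2 y"
    unfolding f1_def f2_def using schwarz[OF S _ sf] by blast

  have g11: "\<And>y. gmet f 1 1 y = E y" by (simp add: gmet_def coord_def E_def f1_def)
  have g22: "gmet f 2 2 y = E y" if y: "y \<in> S" for y using E2[OF y] by (simp add: gmet_def coord_def f2_def)
  have g12: "gmet f 1 2 y = 0" if y: "y \<in> S" for y using f12[OF y] by (simp add: gmet_def coord_def f1_def f2_def)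
  have g21: "gmet f 2 1 y = 0" if y: "y \<in> S" for y using f12[OF y] by (simp add: gmet_def coord_def f1_def f2_def inner_commute)
  have gd: "gdet f y = E y * E y" if y: "y \<in> S" for y unfolding gdet_def g11 g22[OF y] g12[OF y] g21[OF y] by simp
  have gi11: "ginv f 1 1 y = inverse (E y)" if y: "y \<in> S" for y
    unfolding ginv_def gd[OF y] g22[OF y] using Epos[OF y] by (simp add: field_simps)
  have gi22: "ginv f 2 2 y = inverse (E y)" if y: "y \<in> S" for y
    unfolding ginv_def gd[OF y] g11 using Epos[OF y] by (simp add: field_simps)
  have gi12: "ginv f 1 2 y = 0" if y: "y \<in> S" for y unfolding ginv_def g12[OF y] by simp
  have gi21: "ginv f 2 1 y = 0" if y: "y \<in> S" for y unfolding ginv_def g21[OF y] by simp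
  have sff11: "\<And>y. sff f \<nu> 1 1 y = h11 y" by (simp add: sff_def coord_def h11_def f1_def)
  have sff12: "\<And>y. sff f \<nu> 1 2 y = h12 y" by (simp add: sff_def coord_def h12_def f1_def)
  have sff21: "\<And>y. sff f \<nu> 2 1 y = h21 y" by (simp add: sff_def coord_def h21_def f2_def)
  have sff22: "\<And>y. sff f \<nu> 2 2 y = h22 y" by (simp add: sff_def coord_def h22_def f2_def)
  have mH: "meanH f \<nu> y = Hs y" if y: "y \<in> S" for y
    unfolding meanH_def sum12 sff11 sff12 sff21 sff22 gi11[OF y] gi12[OF y] gi21[OF y] gi22[OF y]
    by (simp add: Hs_def algebra_simps)
  have s011: "sff0 f \<nu> 1 1 y = P y" if y: "y \<in> S" for y
    unfolding sff0_def sff11 mH[OF y] g11 using Epos[OF y] by (simp add: Hs_def P_def field_simps)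
  have s012: "sff0 f \<nu> 1 2 y = h12 y" if y: "y \<in> S" for y
    unfolding sff0_def sff12 g12[OF y] by simp
  have s021: "sff0 f \<nu> 2 1 y = h21 y" if y: "y \<in> S" for y
    unfolding sff0_def sff21 g21[OF y] by simp
  have s022: "sff0 f \<nu> 2 2 y = - P y" if y: "y \<in> S" for y
    unfolding sff0_def sff22 mH[OF y] g22[OF y] using Epos[OF y] by (simp add: Hs_def P_def field_simps)
  have h21_12: "\<And>y. y \<in> S \<Longrightarrow> h21 y = h12 y" unfolding h21_def h12_def using sym by simp
  have pmH: "\<And>v y. y \<in> S \<Longrightarrow> pd v (meanH f \<nu>) y = pd v Hs y"
    by (rule pd_cong[OF S]) (auto simp: mH)
  have Hzy: "\<And>y. y \<in> S \<Longrightarrow> dz (\<lambda>y. complex_of_real (meanH f \<nu> y)) y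
      = (complex_of_real (pd 1 Hs y) - \<i> * complex_of_real (pd \<i> Hs y)) / 2"
  proof -
    fix y assume y: "y \<in> S"
    have "\<And>v. pd v (\<lambda>y. complex_of_real (meanH f \<nu> y)) y = pd v (\<lambda>y. complex_of_real (Hs y)) y"
      by (rule pd_cong[OF S y]) (simp add: mH)
    then show "?thesis y" unfolding dz_def using S y sHs by simp
  qed
  have "\<forall>z\<in>S.
      (let \<phi> = (\<lambda>y. complex_of_real (sff0 f \<nu> 1 1 y) - \<i> * complex_of_real (sff0 f \<nu> 1 2 y));
           Hz = dz (\<lambda>y. complex_of_real (meanH f \<nu> y))
       in vector [dzbar \<phi> z, dzbar Hz z] = M z *v vector [\<phi> z, Hz z])"
  proof
    fix z assume z: "z \<in> S"
    show "let \<phi> = (\<lambda>y. complex_of_real (sff0 f \<nu> 1 1 y) - \<i> * complex_of_real (sff0 f \<nu> 1 2 y));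
           Hz = dz (\<lambda>y. complex_of_real (meanH f \<nu> y))
       in vector [dzbar \<phi> z, dzbar Hz z] = M z *v vector [\<phi> z, Hz z]"
    proof -
      have e0: "E z > 0" using Epos[OF z] .
      have f1nz: "f1 z \<noteq> 0" using e0 unfolding E_def by auto
      have f2nz: "f2 z \<noteq> 0" using e0 E2[OF z] by auto
      have nnz: "\<nu> z \<noteq> 0" using n1[OF z] by auto
      have ex: "inner a b = inner a (f1 z) * inner b (f1 z) / E z + inner a (f2 z) * inner b (f2 z) / E z
          + inner a (\<nu> z) * inner b (\<nu> z)" for a b
        using orth3_inner[OF f12[OF z] _ _ f1nz f2nz nnz, of a b] nf1[OF z] nf2[OF z] n1[OF z] E2[OF z]
        unfolding E_def by (simp add: inner_commute)
      have sf1': "smooth_on S (pd v f1)" "smooth_on S (pd v f2)" "smooth_on S (pd v \<nu>)" for v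
        using sf1 sf2 sn by simp_all
      have dE: "pd v E z = 2 * inner (pd v f1 z) (f1 z)" for v
      proof -
        have "pd v E z = inner (f1 z) (pd v f1 z) + inner (pd v f1 z) (f1 z)"
          unfolding E_def using S z sf1 by simp
        then show ?thesis by (simp add: inner_commute)
      qed
      have dE2: "pd v E z = 2 * inner (pd v f2 z) (f2 z)" for v
      proof -
        have "pd v E z = pd v (\<lambda>y. inner (f2 y) (f2 y)) z"
          by (rule pd_cong[OF S z]) (simp add: E2)
        also have "\<dots> = inner (f2 z) (pd v f2 z) + inner (pd v f2 z) (f2 z)"
          using S z sf2 by simp
        finally show ?thesis by (simp add: inner_commute)
      qed
      have d12: "inner (pd v f1 z) (f2 z) + inner (f1 z) (pd v f2 z) = 0" for v
      proof -
        have "0 = pd v (\<lambda>y. (0::real)) z" by simp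
        also have "\<dots> = pd v (\<lambda>y. inner (f1 y) (f2 y)) z"
          by (rule pd_cong[OF S z]) (simp add: f12)
        also have "\<dots> = inner (f1 z) (pd v f2 z) + inner (pd v f1 z) (f2 z)"
          using S z sf1 sf2 by simp
        finally show ?thesis by simp
      qed
      have dn1: "inner (pd v \<nu> z) (f1 z) = - inner (\<nu> z) (pd v f1 z)" for v
      proof -
        have "0 = pd v (\<lambda>y. (0::real)) z" by simp
        also have "\<dots> = pd v (\<lambda>y. inner (\<nu> y) (f1 y)) z"
          by (rule pd_cong[OF S z]) (simp add: nf1)
        also have "\<dots> = inner (\<nu> z) (pd v f1 z) + inner (pd v \<nu> z) (f1 z)"
          using S z sf1 sn by simp
        finally show ?thesis by simp
      qed
      have dn2: "inner (pd v \<nu> z) (f2 z) = - inner (\<nu> z) (pd v f2 z)" for v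
      proof -
        have "0 = pd v (\<lambda>y. (0::real)) z" by simp
        also have "\<dots> = pd v (\<lambda>y. inner (\<nu> y) (f2 y)) z"
          by (rule pd_cong[OF S z]) (simp add: nf2)
        also have "\<dots> = inner (\<nu> z) (pd v f2 z) + inner (pd v \<nu> z) (f2 z)"
          using S z sf2 sn by simp
        finally show ?thesis by simp
      qed
      have dnn: "inner (pd v \<nu> z) (\<nu> z) = 0" for v
      proof -
        have "0 = pd v (\<lambda>y. (1::real)) z" by simp
        also have "\<dots> = pd v (\<lambda>y. inner (\<nu> y) (\<nu> y)) z"
          by (rule pd_cong[OF S z]) (simp add: n1)
        also have "\<dots> = inner (\<nu> z) (pd v \<nu> z) + inner (pd v \<nu> z) (\<nu> z)"
          using S z sn by simp
        finally show ?thesis by (simp add: inner_commute)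
      qed
      have symz: "pd \<i> f1 z = pd 1 f2 z" using sym[OF z] .
      have sch1: "pd \<i> (pd 1 f1) z = pd 1 (pd \<i> f1) z" using schwarz[OF S z sf1] .
      have sch2: "pd \<i> (pd 1 f2) z = pd 1 (pd \<i> f2) z" using schwarz[OF S z sf2] .
      have sch3: "pd \<i> (pd \<i> f1) z = pd \<i> (pd 1 f2) z"
        by (rule pd_cong[OF S z]) (simp add: sym)
      have dh11: "pd v h11 z = inner (pd 1 f1 z) (pd v \<nu> z) + inner (pd v (pd 1 f1) z) (\<nu> z)" for v
        unfolding h11_def using S z sf1 sn by simp
      have dh12: "pd v h12 z = inner (pd \<i> f1 z) (pd v \<nu> z) + inner (pd v (pd \<i> f1) z) (\<nu> z)" for v
        unfolding h12_def using S z sf1 sn by simp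
      have dh22: "pd v h22 z = inner (pd \<i> f2 z) (pd v \<nu> z) + inner (pd v (pd \<i> f2) z) (\<nu> z)" for v
        unfolding h22_def using S z sf2 sn by simp
      define e1 where "e1 = pd 1 E z"
      define e2 where "e2 = pd \<i> E z"
      have G111: "inner (pd 1 f1 z) (f1 z) = e1 / 2" using dE[of 1] unfolding e1_def by simp
      have G121: "inner (pd \<i> f1 z) (f1 z) = e2 / 2" using dE[of \<i>] unfolding e2_def by simp
      have G122: "inner (pd \<i> f1 z) (f2 z) = e1 / 2" using dE2[of 1] symz unfolding e1_def by simp
      have G222: "inner (pd \<i> f2 z) (f2 z) = e2 / 2" using dE2[of \<i>] unfolding e2_def by simp
      have G112: "inner (pd 1 f1 z) (f2 z) = - e2 / 2"
        using d12[of 1] G121 symz by (simp add: inner_commute)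
      have G221: "inner (pd \<i> f2 z) (f1 z) = - e1 / 2"
        using d12[of \<i>] G122 by (simp add: inner_commute)
      have N11: "inner (pd 1 \<nu> z) (f1 z) = - h11 z" using dn1[of 1] unfolding h11_def by (simp add: inner_commute)
      have N12: "inner (pd 1 \<nu> z) (f2 z) = - h12 z" using dn2[of 1] symz unfolding h12_def by (simp add: inner_commute)
      have N21: "inner (pd \<i> \<nu> z) (f1 z) = - h12 z" using dn1[of \<i>] unfolding h12_def by (simp add: inner_commute)
      have N22: "inner (pd \<i> \<nu> z) (f2 z) = - h22 z" using dn2[of \<i>] unfolding h22_def by (simp add: inner_commute)
      have X1: "inner (pd 1 f1 z) (pd \<i> \<nu> z) = (e1 / 2) * (- h12 z) / E z + (- e2 / 2) * (- h22 z) / E z"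
        using ex[of "pd 1 f1 z" "pd \<i> \<nu> z"] G111 G112 N21 N22 dnn[of \<i>] by simp
      have X2: "inner (pd \<i> f1 z) (pd 1 \<nu> z) = (e2 / 2) * (- h11 z) / E z + (e1 / 2) * (- h12 z) / E z"
        using ex[of "pd \<i> f1 z" "pd 1 \<nu> z"] G121 G122 N11 N12 dnn[of 1] by simp
      have X3: "inner (pd \<i> f2 z) (pd 1 \<nu> z) = (- e1 / 2) * (- h11 z) / E z + (e2 / 2) * (- h12 z) / E z"
        using ex[of "pd \<i> f2 z" "pd 1 \<nu> z"] G221 G222 N11 N12 dnn[of 1] by simp
      have X4: "inner (pd \<i> f1 z) (pd \<i> \<nu> z) = (e2 / 2) * (- h12 z) / E z + (e1 / 2) * (- h22 z) / E z"
        using ex[of "pd \<i> f1 z" "pd \<i> \<nu> z"] G121 G122 N21 N22 dnn[of \<i>] by simp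
      have cod1: "pd \<i> h11 z - pd 1 h12 z = e2 * (h11 z + h22 z) / (2 * E z)"
        using dh11[of \<i>] dh12[of 1] sch1 X1 X2 e0 by (simp add: field_simps)
      have cod2: "pd 1 h22 z - pd \<i> h12 z = e1 * (h11 z + h22 z) / (2 * E z)"
        using dh22[of 1] dh12[of \<i>] sch2 sch3 X3 X4 e0 by (simp add: field_simps)
      have pphi: "pd v (\<lambda>y. complex_of_real (sff0 f \<nu> 1 1 y) - \<i> * complex_of_real (sff0 f \<nu> 1 2 y)) z
          = complex_of_real (pd v P z) - \<i> * complex_of_real (pd v h12 z)" for v
      proof -
        have "pd v (\<lambda>y. complex_of_real (sff0 f \<nu> 1 1 y) - \<i> * complex_of_real (sff0 f \<nu> 1 2 y)) z
            = pd v (\<lambda>y. complex_of_real (P y) - \<i> * complex_of_real (h12 y)) z"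
          by (rule pd_cong[OF S z]) (simp only: s011 s012)
        also have "\<dots> = complex_of_real (pd v P z) - \<i> * complex_of_real (pd v h12 z)"
          using S z sP sh by simp
        finally show ?thesis .
      qed
      have phiz: "complex_of_real (sff0 f \<nu> 1 1 z) - \<i> * complex_of_real (sff0 f \<nu> 1 2 z)
          = complex_of_real (P z) - \<i> * complex_of_real (h12 z)" unfolding s011[OF z] s012[OF z] ..
      have sHs1: "smooth_on S (pd v Hs)" for v using sHs by simp
      have pHz: "pd v (dz (\<lambda>y. complex_of_real (meanH f \<nu> y))) z
          = (complex_of_real (pd v (pd 1 Hs) z) - \<i> * complex_of_real (pd v (pd \<i> Hs) z)) / 2" for v
      proof -
        have "pd v (dz (\<lambda>y. complex_of_real (meanH f \<nu> y))) z
            = pd v (\<lambda>y. (complex_of_real (pd 1 Hs y) - \<i> * complex_of_real (pd \<i> Hs y)) / 2) z"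
          by (rule pd_cong[OF S z]) (simp add: Hzy)
        also have "\<dots> = (complex_of_real (pd v (pd 1 Hs) z) - \<i> * complex_of_real (pd v (pd \<i> Hs) z)) / 2"
          using S z sHs1 by simp
        finally show ?thesis .
      qed
      have Hzz: "dz (\<lambda>y. complex_of_real (meanH f \<nu> y)) z
          = (complex_of_real (pd 1 Hs z) - \<i> * complex_of_real (pd \<i> Hs z)) / 2" using Hzy[OF z] .
      have dP: "pd v P z = (pd v h11 z - pd v h22 z) / 2" for v
        unfolding P_def using S z sh by simp
      have Ez: "E z \<noteq> 0" using e0 by simp
      have dEi: "pd v (\<lambda>y. inverse (E y)) z = - (inverse (E z) * pd v E z * inverse (E z))" for v
        by (rule pd_inverse[OF S z sE Ez])
      have dHs: "pd v Hs z = (h11 z + h22 z) * (- (inverse (E z) * pd v E z * inverse (E z))) + (pd v h11 z + pd v h22 z) * inverse (E z)" for v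
      proof -
        have "pd v Hs z = (h11 z + h22 z) * pd v (\<lambda>y. inverse (E y)) z + (pd v h11 z + pd v h22 z) * inverse (E z)"
          unfolding Hs_def using S z sh sEi by simp
        then show ?thesis using dEi by simp
      qed
      have A1: "E z * pd 1 Hs z = pd 1 h11 z + pd 1 h22 z - (h11 z + h22 z) * e1 / E z"
        unfolding e1_def dHs using e0 by (simp add: field_simps)
      have A2: "pd \<i> h12 z = pd 1 h22 z - e1 * (h11 z + h22 z) / (2 * E z)" using cod2 by linarith
      have "pd 1 P z + pd \<i> h12 z = (pd 1 h11 z + pd 1 h22 z - (h11 z + h22 z) * e1 / E z) / 2"
        unfolding dP A2 using e0 by (simp add: field_simps)
      then have realA: "pd 1 P z + pd \<i> h12 z = E z * pd 1 Hs z / 2" using A1 by simp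
      have B2: "pd 1 h12 z = pd \<i> h11 z - e2 * (h11 z + h22 z) / (2 * E z)" using cod1 by linarith
      have realB: "pd \<i> P z - pd 1 h12 z = - (E z * pd \<i> Hs z / 2)"
        unfolding dP B2 dHs e2_def using e0 by (simp add: field_simps)
      have schH: "pd \<i> (pd 1 Hs) z = pd 1 (pd \<i> Hs) z" using schwarz[OF S z sHs] .
      have L11: "pd (coord 1) (\<lambda>y. sqrt (gdet f y) * ginv f 1 1 y * pd (coord 1) (meanH f \<nu>) y) z = pd 1 (pd 1 Hs) z"
      proof -
        have "pd (coord 1) (\<lambda>y. sqrt (gdet f y) * ginv f 1 1 y * pd (coord 1) (meanH f \<nu>) y) z = pd (coord 1) (pd (coord 1) Hs) z"
        proof (rule pd_cong[OF S z])
          fix y assume y: "y \<in> S"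
          show "sqrt (gdet f y) * ginv f 1 1 y * pd (coord 1) (meanH f \<nu>) y = pd (coord 1) Hs y"
            unfolding gd[OF y] gi11[OF y] pmH[OF y] using Epos[OF y] by simp
        qed
        then show ?thesis by (simp add: coord_def)
      qed
      have L22: "pd (coord 2) (\<lambda>y. sqrt (gdet f y) * ginv f 2 2 y * pd (coord 2) (meanH f \<nu>) y) z = pd \<i> (pd \<i> Hs) z"
      proof -
        have "pd (coord 2) (\<lambda>y. sqrt (gdet f y) * ginv f 2 2 y * pd (coord 2) (meanH f \<nu>) y) z = pd (coord 2) (pd (coord 2) Hs) z"
        proof (rule pd_cong[OF S z])
          fix y assume y: "y \<in> S"
          show "sqrt (gdet f y) * ginv f 2 2 y * pd (coord 2) (meanH f \<nu>) y = pd (coord 2) Hs y"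
            unfolding gd[OF y] gi22[OF y] pmH[OF y] using Epos[OF y] by simp
        qed
        then show ?thesis by (simp add: coord_def)
      qed
      have L12: "pd (coord 1) (\<lambda>y. sqrt (gdet f y) * ginv f 1 2 y * pd (coord 2) (meanH f \<nu>) y) z = 0"
      proof -
        have "pd (coord 1) (\<lambda>y. sqrt (gdet f y) * ginv f 1 2 y * pd (coord 2) (meanH f \<nu>) y) z = pd (coord 1) (\<lambda>y. 0::real) z"
        proof (rule pd_cong[OF S z])
          fix y assume y: "y \<in> S"
          show "sqrt (gdet f y) * ginv f 1 2 y * pd (coord 2) (meanH f \<nu>) y = 0"
            unfolding gi12[OF y] by simp
        qed
        then show ?thesis by simp
      qed
      have L21: "pd (coord 2) (\<lambda>y. sqrt (gdet f y) * ginv f 2 1 y * pd (coord 1) (meanH f \<nu>) y) z = 0"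
      proof -
        have "pd (coord 2) (\<lambda>y. sqrt (gdet f y) * ginv f 2 1 y * pd (coord 1) (meanH f \<nu>) y) z = pd (coord 2) (\<lambda>y. 0::real) z"
        proof (rule pd_cong[OF S z])
          fix y assume y: "y \<in> S"
          show "sqrt (gdet f y) * ginv f 2 1 y * pd (coord 1) (meanH f \<nu>) y = 0"
            unfolding gi21[OF y] by simp
        qed
        then show ?thesis by simp
      qed
      have lap: "laplace_g f (meanH f \<nu>) z = inverse (E z) * (pd 1 (pd 1 Hs) z + pd \<i> (pd \<i> Hs) z)"
        unfolding laplace_g_def sum12 L11 L12 L21 L22 gd[OF z] using e0 by (simp add: divide_inverse)
      have nA: "normA0sq f \<nu> z = 2 * (P z ^ 2 + h12 z ^ 2) * (inverse (E z) * inverse (E z))"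
        unfolding normA0sq_def sum12 gi11[OF z] gi12[OF z] gi21[OF z] gi22[OF z] s011[OF z] s012[OF z]
          s021[OF z] s022[OF z] h21_12[OF z] by (simp add: algebra_simps power2_eq_square)
      have wz: "inverse (E z) * (pd 1 (pd 1 Hs) z + pd \<i> (pd \<i> Hs) z) + 2 * (P z ^ 2 + h12 z ^ 2) * (inverse (E z) * inverse (E z)) * Hs z = 0"
        using will[OF z] unfolding lap nA mH[OF z] .
      have wz2: "inverse (E z) * (pd 1 (pd 1 Hs) z + pd \<i> (pd \<i> Hs) z) = - (2 * (P z ^ 2 + h12 z ^ 2) * (inverse (E z) * inverse (E z)) * Hs z)"
        unfolding eq_neg_iff_add_eq_0 by (rule wz)
      have "(pd 1 (pd 1 Hs) z + pd \<i> (pd \<i> Hs) z) / 4 = E z * (inverse (E z) * (pd 1 (pd 1 Hs) z + pd \<i> (pd \<i> Hs) z)) / 4"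
        using Ez by (simp add: field_simps)
      also have "\<dots> = - (Kf z * (P z ^ 2 + h12 z ^ 2))"
        unfolding wz2 Kf_def using e0 by (simp add: field_simps)
      finally have realC: "(pd 1 (pd 1 Hs) z + pd \<i> (pd \<i> Hs) z) / 4 = - (Kf z * (P z ^ 2 + h12 z ^ 2))" .
      have eqA: "dzbar (\<lambda>y. complex_of_real (sff0 f \<nu> 1 1 y) - \<i> * complex_of_real (sff0 f \<nu> 1 2 y)) z
          = complex_of_real (E z / 2) * dz (\<lambda>y. complex_of_real (meanH f \<nu> y)) z"
        unfolding dzbar_def pphi Hzz using realA realB by (simp add: complex_eq_iff field_simps)
      have eqB: "dzbar (dz (\<lambda>y. complex_of_real (meanH f \<nu> y))) z
          = M21 z * (complex_of_real (sff0 f \<nu> 1 1 z) - \<i> * complex_of_real (sff0 f \<nu> 1 2 z))"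
        unfolding dzbar_def pHz phiz M21_def schH using realC by (simp add: complex_eq_iff field_simps power2_eq_square)
      show ?thesis unfolding Let_def eqA eqB
        by (simp add: vec_eq_iff forall_2 matrix_vector_mult_def sum_2 M_def)
    qed
  qed
  then show ?thesis using sM by blast
qed


theorem proposition2p2:
  fixes f \<nu> :: "complex \<Rightarrow> real^3" and u :: "complex \<Rightarrow> real"
  assumes "willmore_on (ball 0 1) f"
    and "conformal_with (ball 0 1) f u"
    and "unit_normal_on (ball 0 1) f \<nu>"
  shows "\<exists>M :: complex \<Rightarrow> complex^2^2. smooth_on (ball 0 1) M \<and>
    (\<forall>z\<in>ball 0 1.
      (let \<phi> = (\<lambda>y. complex_of_real (sff0 f \<nu> 1 1 y) - \<i> * complex_of_real (sff0 f \<nu> 1 2 y));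
           Hz = dz (\<lambda>y. complex_of_real (meanH f \<nu> y))
       in vector [dzbar \<phi> z, dzbar Hz z] = M z *v vector [\<phi> z, Hz z]))"
proof -
  have S: "open (ball (0::complex) 1)" by simp
  have sf: "smooth_on (ball 0 1) f" using assms(1) unfolding willmore_on_def immersion_on_def by blast
  have sn: "smooth_on (ball 0 1) \<nu>" using assms(3) unfolding unit_normal_on_def by blast
  have c1: "\<And>x. x \<in> ball 0 1 \<Longrightarrow> inner (pd \<i> f x) (pd \<i> f x) = inner (pd 1 f x) (pd 1 f x)"
    using assms(2) unfolding conformal_with_def by auto
  have c2: "\<And>x. x \<in> ball 0 1 \<Longrightarrow> inner (pd 1 f x) (pd \<i> f x) = 0"
    using assms(2) unfolding conformal_with_def by auto
  have c3: "\<And>x. x \<in> ball 0 1 \<Longrightarrow> inner (pd 1 f x) (pd 1 f x) > 0"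
    using assms(2) unfolding conformal_with_def by auto
  have n1: "\<And>x. x \<in> ball 0 1 \<Longrightarrow> inner (\<nu> x) (\<nu> x) = 1"
    using assms(3) unfolding unit_normal_on_def norm_eq_1 by auto
  have n2: "\<And>x. x \<in> ball 0 1 \<Longrightarrow> inner (\<nu> x) (pd 1 f x) = 0"
    using assms(3) unfolding unit_normal_on_def by auto
  have n3: "\<And>x. x \<in> ball 0 1 \<Longrightarrow> inner (\<nu> x) (pd \<i> f x) = 0"
    using assms(3) unfolding unit_normal_on_def by auto
  have will: "\<And>x. x \<in> ball 0 1 \<Longrightarrow> laplace_g f (meanH f \<nu>) x + normA0sq f \<nu> x * meanH f \<nu> x = 0"
    using assms(1,3) unfolding willmore_on_def by blast
  show ?thesis by (rule main_geom[OF S sf sn c1 c2 c3 n1 n2 n3 will])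
qed

end
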